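(* Every $q$-Gauss sequence is a $q$-Euler–Gauss sequence.
   Context: $\mu$ is the Möbius function, $[n]_q=1+q+\dots+q^{n-1}$; polynomial congruences modulo $[n]_q$ mean divisibility of the difference by $[n]_q$ in $\mathbb{Z}[q]$. A sequence $(a_n(q))$ in $\mathbb{Z}[q]$ is a $q$-Gauss sequence if $\sum_{d\mid n}\mu(d)a_{n/d}(q^d)\equiv0\pmod{[n]_q}$ for all $n\ge1$; it is a $q$-Euler–Gauss sequence if for all $n\ge1$, $\prod_{d\mid n,\,\mu(d)=1}a_{n/d}(q^d)\equiv\prod_{d\mid n,\,\mu(d)=-1}a_{n/d}(q^d)\pmod{[n]_q}$. *)

theory Defs
  imports "HOL-Computational_Algebra.Computational_Algebra"
begin

definition moebius_mu :: "nat \<Rightarrow> int" where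
  "moebius_mu n = (if n = 0 then 0
     else if squarefree n then (-1) ^ card (prime_factors n) else 0)"

definition q_int :: "nat \<Rightarrow> int poly" where
  "q_int n = (\<Sum>i<n. monom 1 i)"

definition subst_pow :: "int poly \<Rightarrow> nat \<Rightarrow> int poly" where
  "subst_pow p d = pcompose p (monom 1 d)"

definition q_gauss :: "(nat \<Rightarrow> int poly) \<Rightarrow> bool" where
  "q_gauss a \<longleftrightarrow> (\<forall>n\<ge>1. q_int n dvd
      (\<Sum>d | d dvd n. smult (moebius_mu d) (subst_pow (a (n div d)) d)))"

definition q_euler_gauss :: "(nat \<Rightarrow> int poly) \<Rightarrow> bool" where
  "q_euler_gauss a \<longleftrightarrow> (\<forall>n\<ge>1. q_int n dvd
      ((\<Prod>d | d dvd n \<and> moebius_mu d = 1. subst_pow (a (n div d)) d)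
       - (\<Prod>d | d dvd n \<and> moebius_mu d = -1. subst_pow (a (n div d)) d)))"

end

theory Submission
  imports Defs
begin

abbreviation cp :: "int poly \<Rightarrow> complex poly" where "cp p \<equiv> map_poly of_int p"

lemma cp_add: "cp (p + q) = cp p + cp q"
  by (rule poly_eqI) (simp add: coeff_map_poly)
lemma cp_diff: "cp (p - q) = cp p - cp q"
  by (rule poly_eqI) (simp add: coeff_map_poly)
lemma cp_smult: "cp (smult c p) = smult (of_int c) (cp p)"
  by (rule poly_eqI) (simp add: coeff_map_poly)
lemma cp_mult: "cp (p * q) = cp p * cp q"
  by (rule poly_eqI) (simp add: coeff_map_poly coeff_mult)
lemma cp_sum: "cp (sum f A) = (\<Sum>x\<in>A. cp (f x))"
  by (induction A rule: infinite_finite_induct) (simp_all add: cp_add)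
lemma cp_prod: "cp (prod f A) = (\<Prod>x\<in>A. cp (f x))"
  by (induction A rule: infinite_finite_induct) (simp_all add: cp_mult)
lemma cp_pcompose: "cp (pcompose p q) = pcompose (cp p) (cp q)"
  by (induction p) (simp_all add: pcompose_pCons cp_add cp_mult map_poly_pCons)

lemma poly_cp_subst: "poly (cp (subst_pow p d)) z = poly (cp p) (z ^ d)"
  by (simp add: subst_pow_def cp_pcompose poly_pcompose map_poly_monom poly_monom)

lemma coeff_q_int: "coeff (q_int n) i = (if i < n then 1 else 0)"
  by (simp add: q_int_def coeff_sum coeff_monom)

lemma degree_q_int: "n \<ge> 1 \<Longrightarrow> degree (q_int n) = n - 1"
proof (rule antisym)
  assume n: "n \<ge> 1"
  show "degree (q_int n) \<le> n - 1" by (rule degree_le) (auto simp: coeff_q_int)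
  show "n - 1 \<le> degree (q_int n)" by (rule le_degree) (use n in \<open>auto simp: coeff_q_int\<close>)
qed

lemma lead_q_int: "n \<ge> 1 \<Longrightarrow> lead_coeff (q_int n) = 1"
  by (simp add: degree_q_int coeff_q_int)

lemma poly_q_int: "z ^ n = 1 \<Longrightarrow> z \<noteq> 1 \<Longrightarrow> poly (cp (q_int n)) z = 0"
  by (simp add: q_int_def cp_sum map_poly_monom poly_sum poly_monom sum_gp_strict)

lemma crit:
  assumes n: "n \<ge> 1" and h: "\<And>z::complex. z^n = 1 \<Longrightarrow> z \<noteq> 1 \<Longrightarrow> poly (cp f) z = 0"
  shows "q_int n dvd f"
proof -
  let ?g = "q_int n"
  have g0: "?g \<noteq> 0" using lead_q_int[OF n] by auto
  define r where "r = pseudo_mod f ?g"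
  obtain c k where c: "c \<noteq> 0" and eq: "smult c f = ?g * k + r"
    using pseudo_mod(1)[OF g0, of f] r_def by blast
  have deg: "r = 0 \<or> degree r < degree ?g" using pseudo_mod(2)[OF g0, of f] r_def by blast
  have "r = 0"
  proof (rule ccontr)
    assume r0: "r \<noteq> 0"
    have cr0: "cp r \<noteq> 0" using r0 by (subst map_poly_eq_0_iff) auto
    have req: "r = smult c f - ?g * k" using eq by simp
    have sub: "{z::complex. z^n = 1} - {1} \<subseteq> {z. poly (cp r) z = 0}"
    proof
      fix z assume "z \<in> {z::complex. z^n = 1} - {1}"
      hence z: "z^n = 1" "z \<noteq> 1" by auto
      have "cp r = smult (of_int c) (cp f) - cp ?g * cp k"
        unfolding req by (simp add: cp_diff cp_smult cp_mult)
      then show "z \<in> {z. poly (cp r) z = 0}" using h[OF z] poly_q_int[OF z] by simp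
    qed
    have cardU: "card {z::complex. z^n = 1} = n" using n by (intro card_roots_unity_eq) auto
    hence finU: "finite {z::complex. z^n = 1}" using n by (intro card_ge_0_finite) auto
    have "n - 1 = card ({z::complex. z^n = 1} - {1})"
      using cardU finU by (subst card_Diff_singleton) auto
    also have "\<dots> \<le> card {z. poly (cp r) z = 0}"
      by (rule card_mono[OF poly_roots_finite[OF cr0] sub])
    also have "\<dots> \<le> degree (cp r)" by (rule card_poly_roots_bound[OF cr0])
    also have "degree (cp r) = degree r" by (simp add: degree_map_poly)
    finally show False using deg r0 degree_q_int[OF n] by simp
  qed
  then have "?g dvd smult c f" using eq by simp
  thus ?thesis using dvd_monic[OF lead_q_int[OF n] _ c] by blast
qed

lemma mu1: "moebius_mu 1 = 1"
  by (simp add: moebius_mu_def)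
lemma mu1': "moebius_mu (Suc 0) = 1"
  by (simp add: moebius_mu_def)

lemma mu_sq: "prime p \<Longrightarrow> p * p dvd d \<Longrightarrow> moebius_mu d = 0"
proof -
  assume p: "prime p" and d: "p * p dvd d"
  have "\<not> squarefree d" by (rule not_squarefreeI[of p]) (use p d in \<open>auto simp: power2_eq_square\<close>)
  thus ?thesis unfolding moebius_mu_def by simp
qed

lemma mu_mult:
  assumes p: "prime p" and e: "\<not> p dvd e" "e > 0"
  shows "moebius_mu (e * p) = - moebius_mu e"
proof -
  have cop: "coprime e p" using p e using prime_imp_coprime[of p e] by (simp add: coprime_commute)
  have sq: "squarefree (e * p) \<longleftrightarrow> squarefree e"
    using squarefree_mult_coprime[OF cop] squarefree_prime[OF p] squarefree_multD by blast
  have pf: "prime_factors (e * p) = insert p (prime_factors e)"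
    using p e by (subst prime_factors_product) (auto simp: prime_prime_factors)
  have "p \<notin> prime_factors e" using e by auto
  hence "card (prime_factors (e * p)) = Suc (card (prime_factors e))"
    unfolding pf by simp
  thus ?thesis using e p sq unfolding moebius_mu_def by (auto simp: prime_gt_0_nat)
qed

lemma gauss_eval:
  assumes g: "q_gauss a" and N: "N \<ge> 1" and z: "z ^ N = (1::complex)" "z \<noteq> 1"
  shows "(\<Sum>d | d dvd N. of_int (moebius_mu d) * poly (cp (a (N div d))) (z ^ d)) = 0"
proof -
  let ?S = "\<Sum>d | d dvd N. smult (moebius_mu d) (subst_pow (a (N div d)) d)"
  obtain k where k: "?S = q_int N * k" using g N unfolding q_gauss_def by blast
  have "poly (cp ?S) z = 0" unfolding k cp_mult using poly_q_int[OF z] by simp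
  thus ?thesis by (simp add: cp_sum cp_smult poly_sum poly_cp_subst)
qed

lemma key:
  assumes g: "q_gauss a"
  shows "N \<ge> 1 \<Longrightarrow> z ^ N = (1::complex) \<Longrightarrow> prime p \<Longrightarrow> (\<forall>k. z ^ k = 1 \<longrightarrow> p dvd k) \<Longrightarrow>
     poly (cp (a N)) z = poly (cp (a (N div p))) (z ^ p)"
proof (induction N arbitrary: z rule: less_induct)
  case (less N)
  note N = less.prems(1) and zN = less.prems(2) and p = less.prems(3) and ord = less.prems(4)
  define F where "F d = of_int (moebius_mu d) * poly (cp (a (N div d))) (z ^ d)" for d
  define D where "D = {d. d dvd N}"
  define D1 where "D1 = {d. d dvd N \<and> \<not> p dvd d}"
  have pN: "p dvd N" using ord zN by auto
  have z1: "z \<noteq> 1"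
  proof
    assume "z = 1"
    hence "p dvd 1" using ord[rule_format, of 1] by simp
    thus False using p by simp
  qed
  have finD: "finite D" unfolding D_def using N by (intro finite_divisors_nat) auto
  have S0: "sum F D = 0" unfolding F_def D_def using gauss_eval[OF g N zN z1] by simp
  have D1D: "D1 \<subseteq> D" unfolding D1_def D_def by auto
  have img: "(\<lambda>e. e * p) ` D1 \<subseteq> D - D1"
  proof
    fix x assume "x \<in> (\<lambda>e. e * p) ` D1"
    then obtain e where e: "e \<in> D1" "x = e * p" by auto
    have "coprime e p" using e p unfolding D1_def using prime_imp_coprime[of p e] by (simp add: coprime_commute)
    hence "e * p dvd N" using e pN unfolding D1_def by (auto intro: divides_mult)
    thus "x \<in> D - D1" using e unfolding D_def D1_def by auto
  qed
  have "sum F (D - D1) = sum F ((\<lambda>e. e * p) ` D1)"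
  proof (rule sum.mono_neutral_right)
    show "finite (D - D1)" using finD by auto
    show "(\<lambda>e. e * p) ` D1 \<subseteq> D - D1" by (rule img)
    show "\<forall>i\<in>D - D1 - (\<lambda>e. e * p) ` D1. F i = 0"
    proof
      fix d assume d: "d \<in> D - D1 - (\<lambda>e. e * p) ` D1"
      have "p dvd d" using d unfolding D_def D1_def by auto
      then obtain d' where d': "d = d' * p" by (metis dvdE mult.commute)
      have "d' dvd N" using d d' unfolding D_def by (auto intro: dvd_trans[of d' d])
      hence "p dvd d'" using d d' unfolding D1_def by auto
      hence "p * p dvd d" using d' by auto
      thus "F d = 0" unfolding F_def using mu_sq[OF p] by simp
    qed
  qed
  also have "\<dots> = (\<Sum>e\<in>D1. F (e * p))"
    by (subst sum.reindex) (use p prime_gt_0_nat in \<open>auto simp: inj_on_def\<close>)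
  finally have "sum F D = sum F D1 + (\<Sum>e\<in>D1. F (e * p))"
    using sum.subset_diff[OF D1D finD, of F] by simp
  hence S1: "(\<Sum>e\<in>D1. F e + F (e * p)) = 0" using S0 by (simp add: sum.distrib)
  have one: "1 \<in> D1" unfolding D1_def using p by (auto simp: prime_nat_iff)
  have rest: "F e + F (e * p) = 0" if e: "e \<in> D1 - {1}" for e
  proof -
    have eN: "e dvd N" "\<not> p dvd e" "e \<noteq> 1" using e unfolding D1_def by auto
    have e0: "e > 0" using eN N by (cases "e = 0") auto
    have lt: "N div e < N" using eN e0 N by (intro div_less_dividend) auto
    have "e \<le> N" using eN N by (intro dvd_imp_le) auto
    hence Ne: "N div e \<ge> 1" using e0 by (simp add: Suc_le_eq div_greater_zero_iff)
    have ze: "(z ^ e) ^ (N div e) = 1" using zN eN by (simp add: power_mult[symmetric])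
    have ord': "\<forall>k. (z ^ e) ^ k = 1 \<longrightarrow> p dvd k"
      using ord eN p by (metis power_mult prime_dvd_mult_iff)
    have "poly (cp (a (N div e))) (z ^ e) = poly (cp (a (N div e div p))) ((z ^ e) ^ p)"
      by (rule less.IH[OF lt Ne ze p ord'])
    also have "\<dots> = poly (cp (a (N div (e * p)))) (z ^ (e * p))"
      by (simp add: div_mult2_eq power_mult)
    finally show ?thesis unfolding F_def using mu_mult[OF p eN(2) e0] by (simp add: algebra_simps)
  qed
  have "(\<Sum>e\<in>D1. F e + F (e * p)) = F 1 + F (1 * p)"
  proof -
    have finD1: "finite D1" using finD D1D by (rule finite_subset[rotated])
    have "(\<Sum>e\<in>D1. F e + F (e * p)) = (F 1 + F (1 * p)) + (\<Sum>e\<in>D1-{1}. F e + F (e * p))"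
      by (rule sum.remove[OF finD1 one])
    also have "(\<Sum>e\<in>D1-{1}. F e + F (e * p)) = 0" by (rule sum.neutral) (use rest in auto)
    finally show ?thesis by simp
  qed
  hence "F 1 + F p = 0" using S1 by simp
  moreover have "moebius_mu p = -1" using mu_mult[OF p, of 1] mu1 p by (simp add: prime_nat_iff)
  ultimately show ?case unfolding F_def by (simp add: mu1 mu1')
qed

lemma order_prime:
  assumes n: "n \<ge> 1" and z: "z ^ n = (1::complex)" "z \<noteq> 1"
  shows "\<exists>p. prime p \<and> (\<forall>k. z ^ k = 1 \<longrightarrow> p dvd k)"
proof -
  define m where "m = (LEAST k. k > 0 \<and> z ^ k = 1)"
  have ex: "n > 0 \<and> z ^ n = 1" using n z by auto
  have m: "m > 0" "z ^ m = 1" using LeastI[of "\<lambda>k. k > 0 \<and> z ^ k = 1", OF ex] unfolding m_def by auto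
  have m1: "m \<noteq> 1" using m z by auto
  obtain p where p: "prime p" "p dvd m" using prime_factor_nat[OF m1] by blast
  have "m dvd k" if k: "z ^ k = 1" for k
  proof (rule ccontr)
    assume nd: "\<not> m dvd k"
    hence r0: "k mod m > 0" using m by (simp add: mod_greater_zero_iff_not_dvd)
    have "z ^ k = (z ^ m) ^ (k div m) * z ^ (k mod m)"
      by (simp add: power_mult[symmetric] power_add[symmetric])
    hence "z ^ (k mod m) = 1" using k m by simp
    hence "m \<le> k mod m" using r0 unfolding m_def by (intro Least_le) auto
    moreover have "k mod m < m" using m by simp
    ultimately show False by simp
  qed
  thus ?thesis using p by (blast intro: dvd_trans)
qed

lemma swap_props:
  assumes g: "q_gauss a" and n: "n \<ge> 1" and zn: "z ^ n = (1::complex)" and p: "prime p"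
    and ord: "\<forall>k. z ^ k = 1 \<longrightarrow> p dvd k"
    and d: "d dvd n" "moebius_mu d \<noteq> 0"
  defines "h \<equiv> (\<lambda>d. if p dvd d then d div p else d * p)"
  shows "h d dvd n \<and> moebius_mu (h d) = - moebius_mu d \<and> h (h d) = d
     \<and> poly (cp (a (n div h d))) (z ^ h d) = poly (cp (a (n div d))) (z ^ d)"
proof -
  have pn: "p dvd n" using ord zn by auto
  have p0: "p > 0" using p by (simp add: prime_gt_0_nat)
  have gen: "e * p dvd n \<and> moebius_mu (e * p) = - moebius_mu e \<and>
     poly (cp (a (n div e))) (z ^ e) = poly (cp (a (n div (e * p)))) (z ^ (e * p))"
    if e: "e dvd n" "\<not> p dvd e" for e
  proof -
    have e0: "e > 0" using e n by (cases "e = 0") auto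
    have "coprime e p" using e p prime_imp_coprime[of p e] by (simp add: coprime_commute)
    hence c1: "e * p dvd n" using e pn by (auto intro: divides_mult)
    have "e \<le> n" using e n by (intro dvd_imp_le) auto
    hence Ne: "n div e \<ge> 1" using e0 by (simp add: Suc_le_eq div_greater_zero_iff)
    have ze: "(z ^ e) ^ (n div e) = 1" using zn e by (simp add: power_mult[symmetric])
    have ord': "\<forall>k. (z ^ e) ^ k = 1 \<longrightarrow> p dvd k"
      using ord e p by (metis power_mult prime_dvd_mult_iff)
    have "poly (cp (a (n div e))) (z ^ e) = poly (cp (a (n div e div p))) ((z ^ e) ^ p)"
      by (rule key[OF g Ne ze p ord'])
    also have "\<dots> = poly (cp (a (n div (e * p)))) (z ^ (e * p))"
      by (simp add: div_mult2_eq power_mult)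
    finally show ?thesis using c1 mu_mult[OF p e(2) e0] by simp
  qed
  show ?thesis
  proof (cases "p dvd d")
    case False
    thus ?thesis using gen[OF d(1) False] p0 unfolding h_def by simp
  next
    case True
    then obtain e where e: "d = e * p" by (metis dvdE mult.commute)
    have ep: "\<not> p dvd e"
    proof
      assume "p dvd e"
      hence "p * p dvd d" using e by auto
      thus False using mu_sq[OF p] d by simp
    qed
    have ed: "e dvd n" using d e by (auto intro: dvd_trans[of e d])
    have he: "h d = e" using True e p0 unfolding h_def by simp
    have hd: "h e = d" using ep e unfolding h_def by simp
    show ?thesis using gen[OF ed ep] he hd e ed by simp
  qed
qed

theorem theorem5:
  fixes a :: "nat \<Rightarrow> int poly"
  assumes "q_gauss a"
  shows "q_euler_gauss a"
  unfolding q_euler_gauss_def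
proof (intro allI impI)
  fix n :: nat assume n: "n \<ge> 1"
  show "q_int n dvd
      ((\<Prod>d | d dvd n \<and> moebius_mu d = 1. subst_pow (a (n div d)) d)
       - (\<Prod>d | d dvd n \<and> moebius_mu d = -1. subst_pow (a (n div d)) d))"
  proof (rule crit[OF n])
    fix z :: complex assume z: "z ^ n = 1" "z \<noteq> 1"
    obtain p where p: "prime p" "\<forall>k. z ^ k = 1 \<longrightarrow> p dvd k" using order_prime[OF n z] by blast
    define h where "h = (\<lambda>d::nat. if p dvd d then d div p else d * p)"
    define G where "G d = poly (cp (a (n div d))) (z ^ d)" for d
    note sw = swap_props[OF assms n z(1) p(1) p(2), folded h_def G_def]
    have "(\<Prod>d | d dvd n \<and> moebius_mu d = 1. G d) = (\<Prod>d | d dvd n \<and> moebius_mu d = -1. G d)"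
    proof (rule prod.reindex_bij_witness[of _ h h])
      fix d assume "d \<in> {d. d dvd n \<and> moebius_mu d = 1}"
      then show "h (h d) = d" "h d \<in> {d. d dvd n \<and> moebius_mu d = -1}" "G (h d) = G d"
        using sw[of d] unfolding h_def by auto
    next
      fix d assume "d \<in> {d. d dvd n \<and> moebius_mu d = -1}"
      then show "h (h d) = d" "h d \<in> {d. d dvd n \<and> moebius_mu d = 1}"
        using sw[of d] unfolding h_def by auto
    qed
    thus "poly (cp ((\<Prod>d | d dvd n \<and> moebius_mu d = 1. subst_pow (a (n div d)) d)
       - (\<Prod>d | d dvd n \<and> moebius_mu d = -1. subst_pow (a (n div d)) d))) z = 0"
      unfolding G_def by (simp add: cp_diff cp_prod poly_prod poly_cp_subst)
  qed
qed

end
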